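(* Let $t\ge1$ and let $\mathcal{C}_0\subseteq S^\ell$ be a code of length $\ell$ over a set $S$ of size $s$, with dual distance $t+2\le\ell$ and no repeated codewords. Let $\mathcal{T}_{\mathcal{C}_0}=(X,\mathcal{B},\mathcal{G})$ be its associated design and $q$ a prime power. Then the query distribution $\mathcal{Q}$ on $\mathcal{T}_{\mathcal{C}_0}$ (defined in the context) is $t$-private: for every $T\subseteq[1,\ell]$ with $|T|\le t$ and all $i,i'\in X$, the tuples $(\mathcal{Q}(i)_j)_{j\in T}$ and $(\mathcal{Q}(i')_j)_{j\in T}$ have the same distribution; and for every $u\in\mathrm{IC}_q(\mathcal{C}_0)$ and every outcome, $u_i=-\sum_{j\ne j^*(i)}u_{\mathcal{Q}(i)_j}$.
   Context: $\mathcal{T}_{\mathcal{C}_0}$: points $X=S\times[1,\ell]$, groups $G_j=S\times\{j\}$ ($1\le j\le\ell$), blocks $B_c=\{(c_j,j):1\le j\le\ell\}$ for $c\in\mathcal{C}_0$. $\mathrm{IC}_q(\mathcal{C}_0)=\{u\in\mathbb{F}_q^X:\sum_{x\in B_c}u_x=0\ \forall c\in\mathcal{C}_0\}$. Dual distance (Delsarte): with $A_i=\frac{1}{|\mathcal{C}_0|}\#\{(c,c')\in\mathcal{C}_0^2:d(c,c')=i\}$ and $B_k=\frac{1}{|\mathcal{C}_0|}\sum_{i=0}^\ell A_iK_k(i)$, where $K_k(i)=\sum_{j}(-1)^j(s-1)^{k-j}\binom{i}{j}\binom{\ell-i}{k-j}$, the dual distance is the least $k\ge1$ with $B_k\ne0$;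 for a linear code it equals the minimum distance of the dual code. Query distribution: for $i\in X$ let $j^*=j^*(i)$ be the index with $i\in G_{j^*}$, $\mathcal{B}_i$ the set of blocks containing $i$; choose $B$ uniformly in $\mathcal{B}_i$ and independently $\mathcal{Q}(i)_{j^*}$ uniformly in $G_{j^*}$; for $j\ne j^*$, $\mathcal{Q}(i)_j$ is the unique element of $B\cap G_j$. *)

theory Defs
  imports "HOL-Probability.Probability"
begin

text \<open>Codewords of length l over S are functions on the index set {1..l},
  extensional (value undefined outside {1..l}): elements of PiE {1..l} (\<lambda>_. S).\<close>

definition hamming :: "nat \<Rightarrow> (nat \<Rightarrow> 'a) \<Rightarrow> (nat \<Rightarrow> 'a) \<Rightarrow> nat" where
  "hamming l c c' = card {j \<in> {1..l}. c j \<noteq> c' j}"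

definition krawtchouk :: "nat \<Rightarrow> nat \<Rightarrow> nat \<Rightarrow> nat \<Rightarrow> real" where
  "krawtchouk s l k i =
     (\<Sum>j = 0..k. (-1) ^ j * (real s - 1) ^ (k - j) * real (i choose j) * real ((l - i) choose (k - j)))"

definition dist_distrib :: "nat \<Rightarrow> (nat \<Rightarrow> 'a) set \<Rightarrow> nat \<Rightarrow> real" where
  "dist_distrib l C i = card {(c, c'). c \<in> C \<and> c' \<in> C \<and> hamming l c c' = i} / real (card C)"

definition dual_distrib :: "nat \<Rightarrow> nat \<Rightarrow> (nat \<Rightarrow> 'a) set \<Rightarrow> nat \<Rightarrow> real" where
  "dual_distrib s l C k = (\<Sum>i = 0..l. dist_distrib l C i * krawtchouk s l k i) / real (card C)"

definition has_dual_distance :: "nat \<Rightarrow> nat \<Rightarrow> (nat \<Rightarrow> 'a) set \<Rightarrow> nat \<Rightarrow> bool" where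
  "has_dual_distance s l C d \<longleftrightarrow>
     1 \<le> d \<and> dual_distrib s l C d \<noteq> 0 \<and> (\<forall>k. 1 \<le> k \<and> k < d \<longrightarrow> dual_distrib s l C k = 0)"

definition points :: "'a set \<Rightarrow> nat \<Rightarrow> ('a \<times> nat) set" where
  "points S l = S \<times> {1..l}"

definition block :: "nat \<Rightarrow> (nat \<Rightarrow> 'a) \<Rightarrow> ('a \<times> nat) set" where
  "block l c = {(c j, j) | j. j \<in> {1..l}}"

definition IC :: "(nat \<Rightarrow> 'a) set \<Rightarrow> nat \<Rightarrow> 'a set \<Rightarrow> ('a \<times> nat \<Rightarrow> 'f::field) set" where
  "IC C l S = {u. u \<in> points S l \<rightarrow>\<^sub>E UNIV \<and> (\<forall>c \<in> C. (\<Sum>x \<in> block l c. u x) = 0)}"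

text \<open>Blocks containing point i, indexed by their codewords (no repeated codewords).\<close>
definition blocks_through :: "(nat \<Rightarrow> 'a) set \<Rightarrow> nat \<Rightarrow> 'a \<times> nat \<Rightarrow> (nat \<Rightarrow> 'a) set" where
  "blocks_through C l i = {c \<in> C. (fst i, snd i) \<in> block l c}"

text \<open>Query distribution Q(i): a tuple indexed by j in [1,l], with Q(i)_j \<in> G_j.
  Here j* = snd i.\<close>
definition query :: "'a set \<Rightarrow> (nat \<Rightarrow> 'a) set \<Rightarrow> nat \<Rightarrow> 'a \<times> nat \<Rightarrow> (nat \<Rightarrow> 'a \<times> nat) pmf" where
  "query S C l i =
     map_pmf (\<lambda>(c, y). (\<lambda>j. if j = snd i then (y, j)
                             else if j \<in> {1..l} then (c j, j) else undefined))
       (pair_pmf (pmf_of_set (blocks_through C l i)) (pmf_of_set S))"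

end

theory Submission
  imports Defs
begin



lemma alt_sum: "(\<Sum>j=0..M. (-1)^j * real (i choose j) * real ((i+p-j) choose (M-j))) = real (p choose M)"
proof (induction i arbitrary: p M)
  case 0
  have "(\<Sum>j=0..M. (-1)^j * real (0 choose j) * real ((0+p-j) choose (M-j))) = (\<Sum>j\<in>{0}. (-1)^j * real (0 choose j) * real ((0+p-j) choose (M-j)))"
    by (rule sum.mono_neutral_right) auto
  then show ?case by simp
next
  case (Suc i)
  show ?case
  proof (cases M)
    case 0
    then show ?thesis by simp
  next
    case (Suc M')
    have split: "\<And>j. real (Suc i choose j) = real (i choose j) + (if j = 0 then 0 else real (i choose (j - 1)))"
      by (case_tac j) auto
    have "(\<Sum>j=0..M. (-1)^j * real (Suc i choose j) * real ((Suc i+p-j) choose (M-j)))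
      = (\<Sum>j=0..M. (-1)^j * real (i choose j) * real ((i+Suc p-j) choose (M-j)))
       + (\<Sum>j=0..M. (if j = 0 then 0 else (-1)^j * real (i choose (j-1)) * real ((Suc i+p-j) choose (M-j))))"
      by (simp only: sum.distrib[symmetric], rule sum.cong, simp, simp add: split algebra_simps)
    also have "(\<Sum>j=0..M. (if j = 0 then 0 else (-1)^j * real (i choose (j-1)) * real ((Suc i+p-j) choose (M-j))))
       = (\<Sum>j=Suc 0..Suc M'. (-1)^j * real (i choose (j-1)) * real ((Suc i+p-j) choose (M-j)))"
      using Suc by (simp add: sum.atLeast_Suc_atMost)
    also have "\<dots> = (\<Sum>j=0..M'. (-1)^(Suc j) * real (i choose j) * real ((i+p-j) choose (M'-j)))"
      unfolding Suc sum.shift_bounds_cl_Suc_ivl by simp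
    also have "\<dots> = - real (p choose M')"
      using Suc.IH[of p M'] by (simp add: sum_negf)
    finally show ?thesis using Suc.IH[of "Suc p" M] Suc by simp
  qed
qed

lemma triangle_swap:
  fixes F :: "nat \<Rightarrow> nat \<Rightarrow> real"
  shows "(\<Sum>k=0..m. \<Sum>j=0..k. F j (k - j)) = (\<Sum>r=0..m. \<Sum>j=0..m-r. F j r)"
proof -
  have "(\<Sum>k=0..m. \<Sum>j=0..k. F j (k - j)) = (\<Sum>(j,r)\<in>{(j,r). j+r \<le> m}. F j r)"
    using sum.triangle_reindex_eq[of F m] by (simp add: atMost_atLeast0)
  also have "\<dots> = (\<Sum>(r,j)\<in>(SIGMA r:{0..m}. {0..m-r}). F j r)"
    by (rule sum.reindex_bij_witness[where j="\<lambda>(j,r). (r,j)" and i="\<lambda>(r,j). (j,r)"]) auto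
  also have "\<dots> = (\<Sum>r=0..m. \<Sum>j=0..m-r. F j r)"
    by (subst sum.Sigma) auto
  finally show ?thesis .
qed

lemma kraw_id:
  assumes "i \<le> l"
  shows "real s ^ m * real ((l-i) choose m) = (\<Sum>k=0..m. real ((l-k) choose (m-k)) * krawtchouk s l k i)"
proof -
  define n where "n = l - i"
  have l: "l = i + n" using assms n_def by simp
  define F where "F j r = real ((l-(j+r)) choose (m-(j+r))) * ((-1) ^ j * (real s - 1) ^ r * real (i choose j) * real (n choose r))" for j r
  have "(\<Sum>k=0..m. real ((l-k) choose (m-k)) * krawtchouk s l k i) = (\<Sum>k=0..m. \<Sum>j=0..k. F j (k - j))"
    unfolding krawtchouk_def F_def n_def by (auto simp: sum_distrib_left intro!: sum.cong)
  also have "\<dots> = (\<Sum>r=0..m. \<Sum>j=0..m-r. F j r)" by (rule triangle_swap)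
  also have "\<dots> = (\<Sum>r=0..m. (real s - 1) ^ r * real (n choose r) * real ((n - r) choose (m - r)))"
  proof (rule sum.cong[OF refl])
    fix r assume r: "r \<in> {0..m}"
    show "(\<Sum>j=0..m-r. F j r) = (real s - 1) ^ r * real (n choose r) * real ((n - r) choose (m - r))"
    proof (cases "r \<le> n")
      case True
      have "(\<Sum>j=0..m-r. F j r) = (real s - 1) ^ r * real (n choose r) *
          (\<Sum>j=0..m-r. (-1)^j * real (i choose j) * real ((i+(n-r)-j) choose ((m-r)-j)))"
        unfolding F_def l sum_distrib_left
        by (rule sum.cong[OF refl]) (use True r in \<open>auto simp: algebra_simps diff_diff_add\<close>)
      also have "\<dots> = (real s - 1) ^ r * real (n choose r) * real ((n - r) choose (m - r))"
        using alt_sum[where M="m-r" and i=i and p="n-r"] by simp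
      finally show ?thesis .
    next
      case False
      then have z: "n choose r = 0" by simp
      show ?thesis unfolding F_def z by simp
    qed
  qed
  also have "\<dots> = (\<Sum>r=0..m. real (n choose m) * real (m choose r) * (real s - 1) ^ r)"
  proof (rule sum.cong[OF refl])
    fix r assume r: "r \<in> {0..m}"
    show "(real s - 1) ^ r * real (n choose r) * real ((n - r) choose (m - r)) = real (n choose m) * real (m choose r) * (real s - 1) ^ r"
    proof (cases "m \<le> n")
      case True
      then have "(n choose m) * (m choose r) = (n choose r) * ((n - r) choose (m - r))"
        using r by (intro choose_mult) auto
      then have "real (n choose r) * real ((n - r) choose (m - r)) = real (n choose m) * real (m choose r)"
        by (metis of_nat_mult)
      then show ?thesis by (simp add: algebra_simps)
    next
      case False
      have z1: "n choose m = 0" using False by simp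
      have "r > n \<or> (n - r) < (m - r)" using r False by auto
      then have z2: "(n choose r) * ((n - r) choose (m - r)) = 0" by (auto simp del: binomial_eq_0_iff intro: binomial_eq_0)
      have h: "real (n choose r) * real ((n - r) choose (m - r)) = 0"
        using z2 by (metis of_nat_0 of_nat_mult)
      have "(real s - 1) ^ r * real (n choose r) * real ((n - r) choose (m - r)) = (real s - 1) ^ r * (real (n choose r) * real ((n - r) choose (m - r)))"
        by (simp only: mult.assoc)
      also have "\<dots> = 0" by (simp only: h mult_zero_right)
      finally show ?thesis unfolding z1 by simp
    qed
  qed
  also have "\<dots> = real (n choose m) * real s ^ m"
    using binomial_ring[of "real s - 1" 1 m]
    by (simp add: sum_distrib_left atMost_atLeast0 algebra_simps)
  finally show ?thesis by (simp add: n_def)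
qed

lemma card_fibers:
  assumes "finite P" "finite Z" "f ` P \<subseteq> Z"
  shows "card P = (\<Sum>z\<in>Z. card {p\<in>P. f p = z})"
  using sum.group[OF assms, of "\<lambda>_. 1::nat"] by simp

lemma sum_fibers:
  assumes "finite P" "finite Z" "f ` P \<subseteq> Z"
  shows "(\<Sum>p\<in>P. g (f p)) = (\<Sum>z\<in>Z. real (card {p\<in>P. f p = z}) * g z)"
proof -
  have "(\<Sum>p\<in>P. g (f p)) = (\<Sum>z\<in>Z. \<Sum>p\<in>{p\<in>P. f p = z}. g (f p))"
    using sum.group[OF assms, of "\<lambda>p. g (f p)"] by simp
  also have "\<dots> = (\<Sum>z\<in>Z. real (card {p\<in>P. f p = z}) * g z)"
    by (rule sum.cong[OF refl]) simp
  finally show ?thesis .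
qed

lemma double_count:
  assumes "finite A" "finite B"
  shows "(\<Sum>x\<in>A. card {y\<in>B. R x y}) = (\<Sum>y\<in>B. card {x\<in>A. R x y})"
proof -
  have "(\<Sum>x\<in>A. card {y\<in>B. R x y}) = (\<Sum>x\<in>A. \<Sum>y\<in>B. if R x y then 1 else 0)"
    using assms by (simp add: sum.inter_filter[symmetric])
  also have "\<dots> = (\<Sum>y\<in>B. \<Sum>x\<in>A. if R x y then 1 else 0)" by (rule sum.swap)
  also have "\<dots> = (\<Sum>y\<in>B. card {x\<in>A. R x y})"
    using assms by (simp add: sum.inter_filter[symmetric])
  finally show ?thesis .
qed

lemma hamming_le: "hamming l c c' \<le> l"
  unfolding hamming_def by (metis (no_types, lifting) card_atLeastAtMost card_mono diff_Suc_1 finite_atLeastAtMost mem_Collect_eq subsetI)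

lemma dual_pairs:
  assumes "finite C" "C \<noteq> {}"
  shows "dual_distrib s l C k * real (card C) ^ 2 = (\<Sum>p\<in>C \<times> C. krawtchouk s l k (hamming l (fst p) (snd p)))"
proof -
  have cC: "real (card C) > 0" using assms by (simp add: card_gt_0_iff)
  have set_eq: "\<And>i. {(c, c'). c \<in> C \<and> c' \<in> C \<and> hamming l c c' = i} = {p\<in>C\<times>C. hamming l (fst p) (snd p) = i}"
    by auto
  have "dual_distrib s l C k * real (card C) ^ 2 = (\<Sum>i=0..l. real (card {p\<in>C\<times>C. hamming l (fst p) (snd p) = i}) * krawtchouk s l k i)"
    using cC unfolding dual_distrib_def dist_distrib_def set_eq
    by (simp add: power2_eq_square sum_divide_distrib[symmetric] field_simps)
  also have "\<dots> = (\<Sum>p\<in>C \<times> C. krawtchouk s l k (hamming l (fst p) (snd p)))"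
    by (rule sum_fibers[symmetric]) (use assms in \<open>auto simp: hamming_le\<close>)
  finally show ?thesis .
qed

lemma kraw0: "krawtchouk s l 0 i = 1"
  unfolding krawtchouk_def by simp

lemma pairs_binom:
  assumes "finite C" "C \<noteq> {}" "\<forall>k. 1 \<le> k \<and> k \<le> m \<longrightarrow> dual_distrib s l C k = 0"
  shows "(\<Sum>p\<in>C\<times>C. real s ^ m * real ((l - hamming l (fst p) (snd p)) choose m)) = real (l choose m) * real (card C)^2"
proof -
  let ?d = "\<lambda>p. hamming l (fst p) (snd p)"
  have "(\<Sum>p\<in>C\<times>C. real s ^ m * real ((l - ?d p) choose m))
      = (\<Sum>p\<in>C\<times>C. \<Sum>k=0..m. real ((l-k) choose (m-k)) * krawtchouk s l k (?d p))"
    by (rule sum.cong[OF refl], rule kraw_id, rule hamming_le)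
  also have "\<dots> = (\<Sum>k=0..m. real ((l-k) choose (m-k)) * (\<Sum>p\<in>C\<times>C. krawtchouk s l k (?d p)))"
    by (subst sum.swap) (simp add: sum_distrib_left)
  also have "\<dots> = (\<Sum>k=0..m. real ((l-k) choose (m-k)) * (dual_distrib s l C k * real (card C) ^ 2))"
    using dual_pairs[OF assms(1,2)] by simp
  also have "\<dots> = real (l choose m) * (dual_distrib s l C 0 * real (card C) ^ 2)"
    using assms(3) by (simp add: sum.atLeast_Suc_atMost)
  also have "dual_distrib s l C 0 * real (card C) ^ 2 = real (card C) ^ 2"
    using dual_pairs[OF assms(1,2), of s l 0] by (simp add: kraw0 card_cartesian_product power2_eq_square)
  finally show ?thesis .
qed

lemma restrict_eq_iff': "restrict f T = restrict g T \<longleftrightarrow> (\<forall>j\<in>T. f j = g j)"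
  by (auto simp: fun_eq_iff restrict_def)

lemma OA:
  assumes fS: "finite S" and SnE: "S \<noteq> {}" and C: "C \<subseteq> PiE {1..l} (\<lambda>_. S)" and CnE: "C \<noteq> {}"
    and B: "\<forall>k. 1 \<le> k \<and> k \<le> card T \<longrightarrow> dual_distrib (card S) l C k = 0"
    and T: "T \<subseteq> {1..l}" and z: "z \<in> PiE T (\<lambda>_. S)"
  shows "card {c\<in>C. restrict c T = z} * card S ^ card T = card C"
proof -
  define m where "m = card T"
  define s where "s = card S"
  have s0: "s > 0" using fS SnE s_def by (simp add: card_gt_0_iff)
  have fC: "finite C" using C fS by (meson finite_PiE finite_atLeastAtMost finite_subset)
  define N where "N T' = card {p\<in>C\<times>C. restrict (fst p) T' = restrict (snd p) T'}" for T'
  define n where "n T' z = card {c\<in>C. restrict c T' = z}" for T' and z :: "nat \<Rightarrow> 'a"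
  have restr_in: "restrict c T' \<in> PiE T' (\<lambda>_. S)" if "c \<in> C" "T' \<subseteq> {1..l}" for c T'
  proof -
    have "c \<in> PiE {1..l} (\<lambda>_. S)" using that C by auto
    then have "\<forall>x\<in>T'. c x \<in> S" using that by (auto simp: PiE_iff)
    then show ?thesis by auto
  qed
  have cardZ: "card (PiE T' (\<lambda>_. S)) = s ^ card T'" if "T' \<subseteq> {1..l}" for T'
    using that by (subst card_PiE) (auto simp: s_def dest: finite_subset)
  have finZ: "finite (PiE T' (\<lambda>_. S))" if "T' \<subseteq> {1..l}" for T'
    using that fS by (intro finite_PiE) (auto dest: finite_subset)
  have fact1: "N T' = (\<Sum>z\<in>PiE T' (\<lambda>_. S). n T' z ^ 2)" if "T' \<subseteq> {1..l}" for T'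
  proof -
    let ?P = "{p\<in>C\<times>C. restrict (fst p) T' = restrict (snd p) T'}"
    have "N T' = (\<Sum>z\<in>PiE T' (\<lambda>_. S). card {p\<in>?P. restrict (fst p) T' = z})"
      unfolding N_def proof (rule card_fibers)
      show "(\<lambda>p. restrict (fst p) T') ` ?P \<subseteq> PiE T' (\<lambda>_. S)"
      proof
        fix x assume "x \<in> (\<lambda>p. restrict (fst p) T') ` ?P"
        then obtain p where "p \<in> ?P" "x = restrict (fst p) T'" by blast
        then show "x \<in> PiE T' (\<lambda>_. S)" using restr_in[OF _ that, of "fst p"] by auto
      qed
    qed (use fC finZ[OF that] in auto)
    also have "\<dots> = (\<Sum>z\<in>PiE T' (\<lambda>_. S). n T' z ^ 2)"
    proof (rule sum.cong[OF refl])
      fix z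
      have "{p\<in>?P. restrict (fst p) T' = z} = {c\<in>C. restrict c T' = z} \<times> {c\<in>C. restrict c T' = z}"
        by auto
      then show "card {p\<in>?P. restrict (fst p) T' = z} = n T' z ^ 2"
        unfolding n_def by (simp add: card_cartesian_product power2_eq_square)
    qed
    finally show ?thesis .
  qed
  have fact2: "(\<Sum>z\<in>PiE T' (\<lambda>_. S). n T' z) = card C" if "T' \<subseteq> {1..l}" for T'
    unfolding n_def proof (rule card_fibers[symmetric])
      show "(\<lambda>c. restrict c T') ` C \<subseteq> PiE T' (\<lambda>_. S)" using restr_in[OF _ that] by blast
    qed (use fC finZ[OF that] in auto)
  have fact4: "real s ^ card T' * real (N T') - real (card C) ^ 2
      = real s ^ card T' * (\<Sum>z\<in>PiE T' (\<lambda>_. S). (real (n T' z) - real (card C) / real s ^ card T') ^ 2)"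
    if "T' \<subseteq> {1..l}" for T'
  proof -
    let ?Z = "PiE T' (\<lambda>_. S)"
    define \<mu> where "\<mu> = real (card C) / real s ^ card T'"
    have sp: "real s ^ card T' > 0" using s0 by simp
    have r2: "(\<Sum>z\<in>?Z. real (n T' z)) = real (card C)"
      unfolding of_nat_sum[symmetric] using fact2[OF that] by (simp only:)
    have r1: "real (N T') = (\<Sum>z\<in>?Z. real (n T' z) ^ 2)"
      unfolding of_nat_power[symmetric] of_nat_sum[symmetric] using fact1[OF that] by (simp only:)
    have cZ: "real (card ?Z) = real s ^ card T'" using cardZ[OF that] by simp
    have "(\<Sum>z\<in>?Z. (real (n T' z) - \<mu>) ^ 2) = (\<Sum>z\<in>?Z. (real (n T' z) ^ 2 - 2 * \<mu> * real (n T' z)) + \<mu>^2)"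
      by (rule sum.cong[OF refl]) (simp add: power2_diff)
    also have "\<dots> = (\<Sum>z\<in>?Z. real (n T' z) ^ 2) - 2 * \<mu> * (\<Sum>z\<in>?Z. real (n T' z)) + real (card ?Z) * \<mu>^2"
      by (simp add: sum.distrib sum_subtractf sum_distrib_left)
    also have "\<dots> = real (N T') - 2 * \<mu> * real (card C) + real s ^ card T' * \<mu>^2"
      unfolding r1 r2 cZ ..
    finally have eq: "(\<Sum>z\<in>?Z. (real (n T' z) - \<mu>) ^ 2) = real (N T') - 2 * \<mu> * real (card C) + real s ^ card T' * \<mu>^2" .
    have "real s ^ card T' * (real (N T') - 2 * \<mu> * real (card C) + real s ^ card T' * \<mu>^2)
       = real s ^ card T' * real (N T') - real (card C) ^ 2"
      unfolding \<mu>_def using sp by (simp add: field_simps power2_eq_square)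
    then show ?thesis using eq unfolding \<mu>_def by simp
  qed
  define Ts where "Ts = {T'. T' \<subseteq> {1..l} \<and> card T' = m}"
  have fTs: "finite Ts" unfolding Ts_def by (rule finite_subset[of _ "Pow {1..l}"]) auto
  have cTs: "card Ts = l choose m" unfolding Ts_def using n_subsets[of "{1..l}" m] by simp
  define agr where "agr p = {j\<in>{1..l}. fst p j = snd p j}" for p :: "(nat \<Rightarrow> 'a) \<times> (nat \<Rightarrow> 'a)"
  have card_agr: "card (agr p) = l - hamming l (fst p) (snd p)" for p
  proof -
    have "agr p = {1..l} - {j\<in>{1..l}. fst p j \<noteq> snd p j}" unfolding agr_def by auto
    moreover have "card ({1..l} - {j\<in>{1..l}. fst p j \<noteq> snd p j}) = card {1..l} - card {j\<in>{1..l}. fst p j \<noteq> snd p j}"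
      by (rule card_Diff_subset) auto
    ultimately show ?thesis unfolding hamming_def by simp
  qed
  have fact5: "(\<Sum>T'\<in>Ts. N T') = (\<Sum>p\<in>C\<times>C. (l - hamming l (fst p) (snd p)) choose m)"
  proof -
    have "(\<Sum>T'\<in>Ts. N T') = (\<Sum>T'\<in>Ts. card {p\<in>C\<times>C. T' \<subseteq> agr p})"
      unfolding N_def Ts_def agr_def
      by (rule sum.cong[OF refl]) (auto simp: restrict_eq_iff' intro!: arg_cong[where f=card])
    also have "\<dots> = (\<Sum>p\<in>C\<times>C. card {T'\<in>Ts. T' \<subseteq> agr p})"
      by (rule double_count) (use fTs fC in auto)
    also have "\<dots> = (\<Sum>p\<in>C\<times>C. (l - hamming l (fst p) (snd p)) choose m)"
    proof (rule sum.cong[OF refl])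
      fix p
      have "{T'\<in>Ts. T' \<subseteq> agr p} = {B. B \<subseteq> agr p \<and> card B = m}"
        unfolding Ts_def agr_def by auto
      then show "card {T'\<in>Ts. T' \<subseteq> agr p} = (l - hamming l (fst p) (snd p)) choose m"
        using n_subsets[of "agr p" m] card_agr[of p] by (simp add: agr_def)
    qed
    finally show ?thesis .
  qed
  have tot: "(\<Sum>T'\<in>Ts. real s ^ m * real (N T') - real (card C) ^ 2) = 0"
  proof -
    have "(\<Sum>T'\<in>Ts. real s ^ m * real (N T') - real (card C) ^ 2)
        = real s ^ m * real (\<Sum>T'\<in>Ts. N T') - real (card Ts) * real (card C) ^ 2"
      by (simp add: sum_subtractf sum_distrib_left)
    also have "real s ^ m * real (\<Sum>T'\<in>Ts. N T') = (\<Sum>p\<in>C\<times>C. real s ^ m * real ((l - hamming l (fst p) (snd p)) choose m))"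
      unfolding fact5 by (simp add: sum_distrib_left)
    also have "\<dots> = real (l choose m) * real (card C)^2"
      by (rule pairs_binom[OF fC CnE]) (use B in \<open>simp add: m_def s_def\<close>)
    finally show ?thesis using cTs by simp
  qed
  have nonneg: "\<forall>T'\<in>Ts. real s ^ m * real (N T') - real (card C) ^ 2 \<ge> 0"
  proof
    fix T' assume "T' \<in> Ts"
    then have "T' \<subseteq> {1..l}" "card T' = m" unfolding Ts_def by auto
    then show "real s ^ m * real (N T') - real (card C) ^ 2 \<ge> 0"
      using fact4[of T'] by (simp add: sum_nonneg)
  qed
  have TTs: "T \<in> Ts" unfolding Ts_def m_def using T by simp
  have "real s ^ m * real (N T) - real (card C) ^ 2 = 0"
  proof -
    have "\<forall>T'\<in>Ts. real s ^ m * real (N T') - real (card C) ^ 2 = 0"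
      using sum_nonneg_eq_0_iff[OF fTs, of "\<lambda>T'. real s ^ m * real (N T') - real (card C) ^ 2"] nonneg tot
      by fast
    then show ?thesis using TTs by fast
  qed
  then have "(\<Sum>z\<in>PiE T (\<lambda>_. S). (real (n T z) - real (card C) / real s ^ card T) ^ 2) = 0"
    using fact4[OF T] s0 m_def by simp
  then have "(real (n T z) - real (card C) / real s ^ card T) ^ 2 = 0"
  proof -
    note h = sum_nonneg_eq_0_iff[OF finZ[OF T], of "\<lambda>z. (real (n T z) - real (card C) / real s ^ card T) ^ 2"]
    show ?thesis using h \<open>(\<Sum>z\<in>PiE T (\<lambda>_. S). (real (n T z) - real (card C) / real s ^ card T) ^ 2) = 0\<close> z by simp
  qed
  then have "real (n T z) * real s ^ card T = real (card C)"
    using s0 by (simp add: field_simps)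
  then have "real (n T z * s ^ card T) = real (card C)" by simp
  then have "n T z * s ^ card T = card C" by (simp only: of_nat_eq_iff)
  then show ?thesis unfolding n_def s_def .
qed

lemma pair_pmf_of_set:
  assumes "finite A" "A \<noteq> {}" "finite B" "B \<noteq> {}"
  shows "pair_pmf (pmf_of_set A) (pmf_of_set B) = pmf_of_set (A \<times> B)"
proof (rule pmf_eqI)
  fix x :: "'a \<times> 'b"
  obtain a b where x: "x = (a, b)" by (cases x)
  show "pmf (pair_pmf (pmf_of_set A) (pmf_of_set B)) x = pmf (pmf_of_set (A \<times> B)) x"
    unfolding x pmf_pair using assms by (simp add: card_cartesian_product indicator_def)
qed

lemma map_uniform:
  assumes "finite A" "A \<noteq> {}" "finite B" "\<forall>a\<in>A. g a \<in> B" "\<forall>b\<in>B. card {a\<in>A. g a = b} = k"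
  shows "map_pmf g (pmf_of_set A) = pmf_of_set B"
proof -
  have "g ` A \<subseteq> B" using assms(4) by auto
  then have cA: "card A = k * card B"
    using card_fibers[OF assms(1,3), of g] assms(5) by (simp add: mult.commute)
  have "card A > 0" using assms by (simp add: card_gt_0_iff)
  then have k0: "k > 0" and B0: "card B > 0" using cA by auto
  then have BnE: "B \<noteq> {}" by auto
  show ?thesis
  proof (rule pmf_eqI)
    fix b
    have "pmf (map_pmf g (pmf_of_set A)) b = card (A \<inter> g -` {b}) / card A"
      unfolding pmf_map using measure_pmf_of_set[OF assms(2,1)] by simp
    also have "\<dots> = pmf (pmf_of_set B) b"
    proof (cases "b \<in> B")
      case True
      have "A \<inter> g -` {b} = {a\<in>A. g a = b}" by auto
      then show ?thesis using True assms(5) cA k0 BnE assms(3) by simp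
    next
      case False
      then have "A \<inter> g -` {b} = {}" using assms(4) by auto
      then show ?thesis using False BnE assms(3) by simp
    qed
    finally show "pmf (map_pmf g (pmf_of_set A)) b = pmf (pmf_of_set B) b" .
  qed
qed

lemma restrict_eq_ext: "x \<in> extensional T \<Longrightarrow> restrict F T = x \<longleftrightarrow> (\<forall>j\<in>T. F j = x j)"
  by (auto simp: fun_eq_iff restrict_def extensional_def)



lemma OA':
  assumes fS: "finite S" and SnE: "S \<noteq> {}" and C: "C \<subseteq> PiE {1..l} (\<lambda>_. S)" and CnE: "C \<noteq> {}"
    and B: "\<forall>k. 1 \<le> k \<and> k \<le> card T \<longrightarrow> dual_distrib (card S) l C k = 0"
    and T: "T \<subseteq> {1..l}" and z: "\<forall>j\<in>T. z j \<in> S"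
  shows "card {c\<in>C. \<forall>j\<in>T. c j = z j} * card S ^ card T = card C"
proof -
  have "{c\<in>C. \<forall>j\<in>T. c j = z j} = {c\<in>C. restrict c T = restrict z T}"
    by (auto simp: restrict_eq_iff')
  moreover have "restrict z T \<in> PiE T (\<lambda>_. S)" using z by auto
  ultimately show ?thesis using OA[OF fS SnE C CnE B T] by simp
qed

theorem mainTheorem18:
  fixes S :: "'a set" and C0 :: "(nat \<Rightarrow> 'a) set" and l t :: nat
  assumes "finite S"
    and "1 \<le> t"
    and "C0 \<subseteq> PiE {1..l} (\<lambda>_. S)"
    and "has_dual_distance (card S) l C0 (t + 2)"
    and "t + 2 \<le> l"
  shows "(\<forall>T i i'. T \<subseteq> {1..l} \<and> card T \<le> t \<and> i \<in> points S l \<and> i' \<in> points S l \<longrightarrow>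
            map_pmf (\<lambda>Q. restrict Q T) (query S C0 l i) =
            map_pmf (\<lambda>Q. restrict Q T) (query S C0 l i'))
       \<and> (\<forall>(u :: 'a \<times> nat \<Rightarrow> 'f::{finite, field}) \<in> IC C0 l S. \<forall>i \<in> points S l.
            \<forall>Q \<in> set_pmf (query S C0 l i).
              u i = - (\<Sum>j \<in> {1..l} - {snd i}. u (Q j)))"
proof -
  note fS = assms(1) and C = assms(3)
  define s where "s = card S"
  have dd: "dual_distrib s l C0 (t+2) \<noteq> 0" and Bz: "\<forall>k. 1 \<le> k \<and> k < t + 2 \<longrightarrow> dual_distrib s l C0 k = 0"
    using assms(4) unfolding has_dual_distance_def s_def by auto
  have CnE: "C0 \<noteq> {}"
  proof
    assume "C0 = {}"
    then have "dual_distrib s l C0 (t+2) = 0" unfolding dual_distrib_def by simp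
    then show False using dd by simp
  qed
  have fC: "finite C0" using C fS by (meson finite_PiE finite_atLeastAtMost finite_subset)
  have SnE: "S \<noteq> {}"
  proof -
    obtain c where "c \<in> C0" using CnE by auto
    then have "c 1 \<in> S" using C assms(5) by (auto simp: PiE_iff)
    then show ?thesis by auto
  qed
  have s0: "s > 0" using fS SnE s_def by (simp add: card_gt_0_iff)
  have OAt: "card {c\<in>C0. \<forall>j\<in>T. c j = z j} * s ^ card T = card C0"
    if "T \<subseteq> {1..l}" "card T \<le> t + 1" "\<forall>j\<in>T. z j \<in> S" for T z
    unfolding s_def by (rule OA'[OF fS SnE C CnE _ that(1) that(3)]) (use Bz that(2) s_def in auto)
  define BT where "BT i = {c\<in>C0. c (snd i) = fst i}" for i :: "'a \<times> nat"
  have BT_eq: "blocks_through C0 l i = BT i" if "i \<in> points S l" for i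
    using that unfolding blocks_through_def BT_def block_def points_def by auto
  have BT_fin: "finite (BT i)" for i using fC unfolding BT_def by auto
  have BT_ne: "BT i \<noteq> {}" if "i \<in> points S l" for i
  proof -
    have "card {c\<in>C0. \<forall>j\<in>{snd i}. c j = (\<lambda>_. fst i) j} * s ^ card {snd i} = card C0"
      by (rule OAt) (use that assms(2) in \<open>auto simp: points_def\<close>)
    moreover have "card C0 > 0" using fC CnE by (simp add: card_gt_0_iff)
    ultimately have "card (BT i) * s = card C0" "card C0 > 0" unfolding BT_def by simp_all
    then have "card (BT i) > 0" by (intro gr0I) simp
    then show ?thesis by auto
  qed
  define g :: "'a \<times> nat \<Rightarrow> (nat \<Rightarrow> 'a) \<times> 'a \<Rightarrow> nat \<Rightarrow> 'a \<times> nat" where "g i = (\<lambda>(c, y). (\<lambda>j. if j = snd i then (y, j)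
                             else if j \<in> {1..l} then (c j, j) else undefined))" for i
  have query_eq: "query S C0 l i = map_pmf (g i) (pmf_of_set (BT i \<times> S))" if "i \<in> points S l" for i
    unfolding query_def g_def BT_eq[OF that]
    by (subst pair_pmf_of_set) (use BT_fin BT_ne[OF that] fS SnE in auto)
  show ?thesis
  proof
    show "\<forall>T i i'. T \<subseteq> {1..l} \<and> card T \<le> t \<and> i \<in> points S l \<and> i' \<in> points S l \<longrightarrow>
            map_pmf (\<lambda>Q. restrict Q T) (query S C0 l i) =
            map_pmf (\<lambda>Q. restrict Q T) (query S C0 l i')"
    proof (intro allI impI)
      fix T i i' assume H: "T \<subseteq> {1..l} \<and> card T \<le> t \<and> i \<in> points S l \<and> i' \<in> points S l"
      have U: "map_pmf (\<lambda>Q. restrict Q T) (query S C0 l i) = pmf_of_set (PiE T (\<lambda>j. S \<times> {j}))"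
        if i: "i \<in> points S l" and T: "T \<subseteq> {1..l}" "card T \<le> t" for i
      proof -
        define h where "h = (\<lambda>Q. restrict Q T) \<circ> g i"
        define js where "js = snd i"
        define a0 where "a0 = fst i"
        have js: "js \<in> {1..l}" and a0: "a0 \<in> S" using i unfolding points_def js_def a0_def by auto
        have BTi: "BT i = {c\<in>C0. c js = a0}" unfolding BT_def js_def a0_def ..
        have finT: "finite T" using T(1) by (rule finite_subset) simp
        have finU: "finite (PiE T (\<lambda>j. S \<times> {j}))" using finT fS by (intro finite_PiE) auto
        have cS: "c j \<in> S" if "c \<in> C0" "j \<in> {1..l}" for c j
          using that C by (auto simp: PiE_iff)
        have hj: "g i (c, y) j = (if j = js then (y, j) else (c j, j))" if "j \<in> {1..l}" for c y j
          using that unfolding g_def js_def by simp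
        have maps: "\<forall>a\<in>BT i \<times> S. h a \<in> PiE T (\<lambda>j. S \<times> {j})"
        proof
          fix a assume a: "a \<in> BT i \<times> S"
          obtain c y where "a = (c, y)" by (cases a)
          with a have "c \<in> C0" "y \<in> S" unfolding BT_def by auto
          then show "h a \<in> PiE T (\<lambda>j. S \<times> {j})"
            unfolding h_def \<open>a = (c, y)\<close> using T(1) hj cS by (auto simp: PiE_iff)
        qed
        have fib: "card {a\<in>BT i \<times> S. h a = x} * s ^ card T = card C0"
          if x: "x \<in> PiE T (\<lambda>j. S \<times> {j})" for x
        proof -
          define z where "z j = (if j = js then a0 else fst (x j))" for j
          have xj: "x j = (fst (x j), j)" "fst (x j) \<in> S" if "j \<in> T" for j
            using x that by (auto simp: PiE_iff)
          have xe: "x \<in> extensional T" using x by (auto simp: PiE_iff)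
          have hx: "h (c, y) = x \<longleftrightarrow> (\<forall>j\<in>T. (if j = js then (y, j) else (c j, j)) = x j)" for c y
          proof -
            have hjT: "\<And>j. j \<in> T \<Longrightarrow> g i (c, y) j = (if j = js then (y, j) else (c j, j))"
              using hj T(1) by blast
            have "h (c, y) = x \<longleftrightarrow> (\<forall>j\<in>T. g i (c, y) j = x j)"
              unfolding h_def o_def using restrict_eq_ext[OF xe] by simp
            also have "\<dots> \<longleftrightarrow> (\<forall>j\<in>T. (if j = js then (y, j) else (c j, j)) = x j)"
              using hjT by (intro ball_cong) auto
            finally show ?thesis .
          qed
          show ?thesis
          proof (cases "js \<in> T")
            case True
            have "{a\<in>BT i \<times> S. h a = x} = (\<lambda>c. (c, fst (x js))) ` {c\<in>C0. \<forall>j\<in>T. c j = z j}"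
            proof (intro set_eqI iffI)
              fix a assume a: "a \<in> {a\<in>BT i \<times> S. h a = x}"
              obtain c y where acy: "a = (c, y)" by (cases a)
              with a have a1: "(c, y) \<in> BT i \<times> S" "h (c, y) = x" by auto
              then have c: "c \<in> C0" "c js = a0" "y \<in> S" "\<forall>j\<in>T. (if j = js then (y, j) else (c j, j)) = x j"
                unfolding BTi hx by auto
              have "(y, js) = x js" using c(4) True by auto
              then have "y = fst (x js)" by (metis fst_conv)
              moreover have "\<forall>j\<in>T. c j = z j"
              proof
                fix j assume j: "j \<in> T"
                show "c j = z j"
                proof (cases "j = js")
                  case True then show ?thesis using c(2) unfolding z_def by simp
                next
                  case False
                  then have "(c j, j) = x j" using c(4) j by auto
                  then have "c j = fst (x j)" by (metis fst_conv)
                  then show ?thesis using False unfolding z_def by simp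
                qed
              qed
              ultimately show "a \<in> (\<lambda>c. (c, fst (x js))) ` {c\<in>C0. \<forall>j\<in>T. c j = z j}"
                using acy c(1) by auto
            next
              fix a assume "a \<in> (\<lambda>c. (c, fst (x js))) ` {c\<in>C0. \<forall>j\<in>T. c j = z j}"
              then obtain c where c: "c \<in> C0" "\<forall>j\<in>T. c j = z j" and acy: "a = (c, fst (x js))" by auto
              have "c js = a0" using c(2) True unfolding z_def by auto
              moreover have "\<forall>j\<in>T. (if j = js then (fst (x js), j) else (c j, j)) = x j"
                using c(2) xj unfolding z_def by auto
              moreover have "fst (x js) \<in> S" using xj True by auto
              ultimately show "a \<in> {a\<in>BT i \<times> S. h a = x}" unfolding acy BTi mem_Collect_eq hx using c(1) by auto
            qed
            moreover have "inj (\<lambda>c::nat \<Rightarrow> 'a. (c, fst (x js)))" by (auto simp: inj_def)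
            ultimately have "card {a\<in>BT i \<times> S. h a = x} = card {c\<in>C0. \<forall>j\<in>T. c j = z j}"
              by (simp add: card_image inj_on_def)
            moreover have "card {c\<in>C0. \<forall>j\<in>T. c j = z j} * s ^ card T = card C0"
              by (rule OAt) (use T xj a0 in \<open>auto simp: z_def\<close>)
            ultimately show ?thesis by simp
          next
            case False
            have "{a\<in>BT i \<times> S. h a = x} = {c\<in>C0. \<forall>j\<in>insert js T. c j = z j} \<times> S"
            proof (intro set_eqI iffI)
              fix a assume a: "a \<in> {a\<in>BT i \<times> S. h a = x}"
              obtain c y where acy: "a = (c, y)" by (cases a)
              with a have a1: "(c, y) \<in> BT i \<times> S" "h (c, y) = x" by auto
              then have c: "c \<in> C0" "c js = a0" "y \<in> S" "\<forall>j\<in>T. (if j = js then (y, j) else (c j, j)) = x j"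
                unfolding BTi hx by auto
              have "\<forall>j\<in>insert js T. c j = z j"
              proof
                fix j assume j: "j \<in> insert js T"
                show "c j = z j"
                proof (cases "j = js")
                  case True then show ?thesis using c(2) unfolding z_def by simp
                next
                  case jne: False
                  then have "j \<in> T" using j by auto
                  then have "(c j, j) = x j" using c(4) jne by auto
                  then have "c j = fst (x j)" by (metis fst_conv)
                  then show ?thesis using jne unfolding z_def by simp
                qed
              qed
              then show "a \<in> {c\<in>C0. \<forall>j\<in>insert js T. c j = z j} \<times> S" using acy c(1,3) by auto
            next
              fix a assume a: "a \<in> {c\<in>C0. \<forall>j\<in>insert js T. c j = z j} \<times> S"
              obtain c y where acy: "a = (c, y)" by (cases a)
              with a have c: "c \<in> C0" "\<forall>j\<in>insert js T. c j = z j" "y \<in> S" by auto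
              have "c js = a0" using c(2) unfolding z_def by auto
              moreover have "\<forall>j\<in>T. (if j = js then (y, j) else (c j, j)) = x j"
                using c(2) xj False unfolding z_def by auto
              ultimately show "a \<in> {a\<in>BT i \<times> S. h a = x}" unfolding acy BTi mem_Collect_eq hx using c(1,3) by auto
            qed
            then have "card {a\<in>BT i \<times> S. h a = x} = card {c\<in>C0. \<forall>j\<in>insert js T. c j = z j} * s"
              by (simp add: card_cartesian_product s_def)
            moreover have "card {c\<in>C0. \<forall>j\<in>insert js T. c j = z j} * s ^ card (insert js T) = card C0"
              by (rule OAt) (use T xj a0 js finT in \<open>auto simp: z_def card_insert_if\<close>)
            moreover have "card (insert js T) = Suc (card T)" using False finT by simp
            ultimately show ?thesis by (simp add: algebra_simps)
          qed
        qed
        have "map_pmf (\<lambda>Q. restrict Q T) (query S C0 l i) = map_pmf h (pmf_of_set (BT i \<times> S))"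
          unfolding query_eq[OF i] h_def by (simp add: pmf.map_comp)
        also have "\<dots> = pmf_of_set (PiE T (\<lambda>j. S \<times> {j}))"
        proof (rule map_uniform[where k = "card C0 div s ^ card T"])
          show "\<forall>b\<in>PiE T (\<lambda>j. S \<times> {j}). card {a\<in>BT i \<times> S. h a = b} = card C0 div s ^ card T"
          proof
            fix b assume b: "b \<in> PiE T (\<lambda>j. S \<times> {j})"
            have sp: "s ^ card T > 0" using s0 by simp
            have "card C0 div s ^ card T = card {a\<in>BT i \<times> S. h a = b} * s ^ card T div s ^ card T"
              using fib[OF b] by simp
            also have "\<dots> = card {a\<in>BT i \<times> S. h a = b}" using sp by simp
            finally show "card {a\<in>BT i \<times> S. h a = b} = card C0 div s ^ card T" by simp
          qed
        qed (use BT_fin BT_ne[OF i] fS SnE finU maps in auto)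
        finally show ?thesis .
      qed
      show "map_pmf (\<lambda>Q. restrict Q T) (query S C0 l i) = map_pmf (\<lambda>Q. restrict Q T) (query S C0 l i')"
        using U H by auto
    qed
  next
    show "\<forall>(u :: 'a \<times> nat \<Rightarrow> 'f::{finite, field}) \<in> IC C0 l S. \<forall>i \<in> points S l.
            \<forall>Q \<in> set_pmf (query S C0 l i).
              u i = - (\<Sum>j \<in> {1..l} - {snd i}. u (Q j))"
    proof (intro ballI)
      fix u :: "'a \<times> nat \<Rightarrow> 'f" and i Q
      assume u: "u \<in> IC C0 l S" and i: "i \<in> points S l" and Q: "Q \<in> set_pmf (query S C0 l i)"
      obtain c y where cy: "c \<in> BT i" "y \<in> S" "Q = g i (c, y)"
        using Q unfolding query_eq[OF i] using BT_fin BT_ne[OF i] fS SnE by auto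
      have c: "c \<in> C0" "c (snd i) = fst i" using cy unfolding BT_def by auto
      have si: "snd i \<in> {1..l}" using i unfolding points_def by auto
      have "block l c = (\<lambda>j. (c j, j)) ` {1..l}" unfolding block_def by auto
      moreover have "inj_on (\<lambda>j. (c j, j)) {1..l}" by (auto simp: inj_on_def)
      ultimately have "(\<Sum>x\<in>block l c. u x) = (\<Sum>j\<in>{1..l}. u (c j, j))"
        by (simp add: sum.reindex)
      also have "\<dots> = u (c (snd i), snd i) + (\<Sum>j\<in>{1..l} - {snd i}. u (c j, j))"
        using si by (simp add: sum.remove)
      also have "u (c (snd i), snd i) = u i" using c by (cases i) auto
      also have "(\<Sum>j\<in>{1..l} - {snd i}. u (c j, j)) = (\<Sum>j\<in>{1..l} - {snd i}. u (Q j))"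
        unfolding cy(3) g_def by (rule sum.cong) auto
      finally have "u i + (\<Sum>j\<in>{1..l} - {snd i}. u (Q j)) = 0"
        using u c(1) unfolding IC_def by auto
      then show "u i = - (\<Sum>j\<in>{1..l} - {snd i}. u (Q j))" by (simp add: eq_neg_iff_add_eq_0)
    qed
  qed
qed

end
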